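(* Consider a congestion game with $m\ge1$ players and $F\ge 2$ facilities in which every player has the full action space $\mathcal A_i=2^{\mathcal F}$, and let $\bm a^*$ be a pure Nash equilibrium. Let $S=\{\bm a^*\}\cup\{(a^*_i\,\triangle\,\{f\},\bm a^*_{-i}): i\in[m],\ f\in\mathcal F\}$ (the NE together with all joint actions in which exactly one player toggles membership of exactly one facility; $|S|=mF+1$), let $\rho$ be uniform on $S$, and let $\bm a^1,\dots,\bm a^n$ be i.i.d. from $\rho$. Let $\delta\in(0,1)$. If $n\ge 8(mF+1)\log((mF+1)/\delta)$, then with probability at least $1-\delta$, for every $i\in[m]$ and every $\pi_i\in\Delta(\mathcal A_i)$, $$V\succeq I+\frac{n}{2mF^4}\,\mathbb E_{\bm a\sim(\pi_i,\bm a^*_{-i})}\big[A_i(\bm a)A_i(\bm a)^\top\big],$$ where $(\pi_i,\bm a^*_{-i})$ denotes the policy in which player $i$ plays $\pi_i$ and every other player $j$ plays $a^*_j$ deterministically. That is, Assumption (Weak Covariance Domination) holds with $C_{\mathrm{agent}}=\frac{1}{2mF^4}$ and $\pi^*=\bm a^*$.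
   Context: Congestion game: $m$ players, finite facility set $\mathcal F$ with $F=|\mathcal F|$, action sets $\mathcal A_i\subseteq 2^{\mathcal F}$, $\mathcal A=\prod_i\mathcal A_i$, $n^f(\bm a)=|\{i: f\in a_i\}|$; facility $f$ with $\ell\ge1$ users has mean reward $r^f(\ell)$ and player $i$'s mean reward is $r_i(\bm a)=\sum_{f\in a_i}r^f(n^f(\bm a))$. A pure Nash equilibrium is a joint action $\bm a^*$ such that no player can increase $r_i$ by changing only its own action. Feature map: let $d=mF$ and index the coordinates of $\mathbb R^d$ by pairs $(f,\ell)$ with $f\in\mathcal F$, $\ell\in\{1,\dots,m\}$; let $e_{(f,\ell)}$ be the standard basis vectors. For $i\in[m]$ and $\bm a\in\mathcal A$, $A_i(\bm a)=\sum_{f\in a_i}e_{(f,n^f(\bm a))}\in\{0,1\}^d$, so that $r_i(\bm a)=\langle A_i(\bm a),\theta\rangle$ with $\theta_{(f,\ell)}=r^f(\ell)$. Agent-level covariance matrix: $V=I+\sum_{k=1}^n\sum_{i=1}^m A_i(\bm a^k)A_i(\bm a^k)^\top$, where $\bm a^1,\dots,\bm a^n$ are the joint actions in the dataset. $\succeq$ is the positive semidefinite (Loewner) order. *)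

theory Defs
  imports "HOL-Probability.Probability"
begin

text \<open>Joint actions: player j (for j < m) plays the set of facilities a j.
  Facilities are the elements of the finite type 'f; every player's action space is the
  full power set.\<close>

type_synonym 'f joint = "nat \<Rightarrow> 'f set"

definition nusers :: "nat \<Rightarrow> 'f joint \<Rightarrow> 'f \<Rightarrow> nat" where
  "nusers m a f = card {j \<in> {0..<m}. f \<in> a j}"

definition reward :: "nat \<Rightarrow> ('f \<Rightarrow> nat \<Rightarrow> real) \<Rightarrow> nat \<Rightarrow> 'f joint \<Rightarrow> real" where
  "reward m r i a = (\<Sum>f\<in>a i. r f (nusers m a f))"

definition pure_NE :: "nat \<Rightarrow> ('f \<Rightarrow> nat \<Rightarrow> real) \<Rightarrow> 'f joint \<Rightarrow> bool" where
  "pure_NE m r a \<longleftrightarrow> (\<forall>i<m. \<forall>b. reward m r i (a(i := b)) \<le> reward m r i a)"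

text \<open>Coordinates of R^d, d = mF, indexed by pairs (f, l), l in {1..m}.\<close>
definition coords :: "nat \<Rightarrow> ('f \<times> nat) set" where
  "coords m = UNIV \<times> {1..m}"

definition feat :: "nat \<Rightarrow> nat \<Rightarrow> 'f joint \<Rightarrow> ('f \<times> nat) \<Rightarrow> real" where
  "feat m i a = (\<lambda>(f, l). if f \<in> a i \<and> l = nusers m a f then 1 else 0)"

definition idm :: "('f \<times> nat) \<Rightarrow> ('f \<times> nat) \<Rightarrow> real" where
  "idm p q = (if p = q then 1 else 0)"

definition covV :: "nat \<Rightarrow> nat \<Rightarrow> (nat \<Rightarrow> 'f joint) \<Rightarrow> ('f \<times> nat) \<Rightarrow> ('f \<times> nat) \<Rightarrow> real" where
  "covV m n data p q = idm p q + (\<Sum>k\<in>{1..n}. \<Sum>i<m. feat m i (data k) p * feat m i (data k) q)"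

definition loewner_ge :: "('a set) \<Rightarrow> ('a \<Rightarrow> 'a \<Rightarrow> real) \<Rightarrow> ('a \<Rightarrow> 'a \<Rightarrow> real) \<Rightarrow> bool" where
  "loewner_ge D M N \<longleftrightarrow> (\<forall>x. (\<Sum>p\<in>D. \<Sum>q\<in>D. x p * (M p q - N p q) * x q) \<ge> 0)"

definition toggle_set :: "nat \<Rightarrow> 'f joint \<Rightarrow> 'f joint set" where
  "toggle_set m astar = insert astar
     {astar(i := (if f \<in> astar i then astar i - {f} else insert f (astar i))) | i f. i < m}"

definition dataset_pmf :: "nat \<Rightarrow> 'f joint set \<Rightarrow> (nat \<Rightarrow> 'f joint) pmf" where
  "dataset_pmf n S = Pi_pmf {1..n} undefined (\<lambda>_. pmf_of_set S)"

end

theory Submission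
  imports Defs
begin

definition tg :: "'f set \<Rightarrow> 'f \<Rightarrow> 'f set" where
  "tg A f = (if f \<in> A then A - {f} else insert f A)"

lemma ind_identity:
  fixes a b :: "'f::finite set"
  shows "(if g \<in> b then 1 else 0::real) = (1 - real (card {f. (f \<in> a) \<noteq> (f \<in> b)})) * (if g \<in> a then 1 else 0)
     + (\<Sum>f\<in>{f. (f \<in> a) \<noteq> (f \<in> b)}. if g \<in> tg a f then 1 else 0)"
proof -
  define D where "D = {f. (f \<in> a) \<noteq> (f \<in> b)}"
  have "(\<Sum>f\<in>D. if g \<in> tg a f then 1 else (0::real)) =
     (\<Sum>f\<in>D. (if g \<in> a then 1 else 0) + (if f = g then (if g \<in> a then -1 else 1) else 0))"
    by (rule sum.cong) (auto simp: tg_def)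
  also have "\<dots> = real (card D) * (if g \<in> a then 1 else 0) + (if g \<in> D then (if g \<in> a then -1 else 1) else 0)"
    by (simp add: sum.distrib)
  finally have "(\<Sum>f\<in>D. if g \<in> tg a f then 1 else (0::real)) = real (card D) * (if g \<in> a then 1 else 0) + (if g \<in> D then (if g \<in> a then -1 else 1) else 0)" .
  then show ?thesis unfolding D_def[symmetric] by (auto simp: D_def algebra_simps)
qed

lemma Q_identity:
  fixes a b :: "'f::finite set" and E :: "'f \<times> nat \<Rightarrow> real" and x :: "'f \<times> nat \<Rightarrow> real"
  shows "(\<Sum>p\<in>C. x p * (E p * (if fst p \<in> b then 1 else 0))) =
     (1 - real (card {f. (f \<in> a) \<noteq> (f \<in> b)})) * (\<Sum>p\<in>C. x p * (E p * (if fst p \<in> a then 1 else 0)))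
     + (\<Sum>f\<in>{f. (f \<in> a) \<noteq> (f \<in> b)}. \<Sum>p\<in>C. x p * (E p * (if fst p \<in> tg a f then 1 else 0)))"
proof -
  define D where "D = {f. (f \<in> a) \<noteq> (f \<in> b)}"
  have pw: "x p * (E p * (if fst p \<in> b then 1 else 0)) =
     (1 - real (card D)) * (x p * (E p * (if fst p \<in> a then 1 else 0))) +
     (\<Sum>f\<in>D. x p * (E p * (if fst p \<in> tg a f then 1 else 0)))" for p
  proof -
    have h: "(if fst p \<in> b then 1 else 0::real) = (1 - real (card D)) * (if fst p \<in> a then 1 else 0)
     + (\<Sum>f\<in>D. if fst p \<in> tg a f then 1 else 0)"
      using ind_identity[of "fst p" b a] unfolding D_def[symmetric] .
    show ?thesis unfolding h
      by (simp add: algebra_simps sum_distrib_left split del: if_split)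
  qed
  show ?thesis unfolding D_def[symmetric]
    by (simp add: pw sum.distrib sum_distrib_left sum.swap[of _ D])
qed

lemma sq_bound:
  fixes y0 :: real and y :: "'f::finite \<Rightarrow> real" and D :: "'f set"
  shows "((1 - real (card D)) * y0 + (\<Sum>f\<in>D. y f))^2 \<le> (real CARD('f))^2 * (y0^2 + (\<Sum>f\<in>UNIV. (y f)^2))"
proof -
  define k where "k = real (card D)"
  define s where "s = (\<Sum>f\<in>D. y f)"
  define Y where "Y = (\<Sum>f\<in>D. (y f)^2)"
  define Yu where "Yu = (\<Sum>f\<in>UNIV. (y f)^2)"
  have kF: "k \<le> real CARD('f)" unfolding k_def by (simp add: card_mono)
  have F1: "1 \<le> real CARD('f)" by simp
  have k0: "0 \<le> k" by (simp add: k_def)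
  have sY: "s^2 \<le> Y * k" unfolding s_def Y_def k_def by (rule sum_squared_le_sum_of_squares)
  have YYu: "Y \<le> Yu" unfolding Y_def Yu_def by (rule sum_mono2) auto
  have Y0: "0 \<le> Y" unfolding Y_def by (simp add: sum_nonneg)
  have y00: "0 \<le> y0^2" by simp
  have coef: "(1 - k)^2 + k \<le> (real CARD('f))^2"
  proof (cases "k \<ge> 1")
    case True
    then have "(1-k)^2 + k \<le> k^2" by (simp add: power2_eq_square algebra_simps)
    also have "\<dots> \<le> (real CARD('f))^2" using kF k0 by (simp add: power_mono)
    finally show ?thesis .
  next
    case False
    then have "k = 0" using k0 unfolding k_def by (simp add: not_le)
    then show ?thesis using F1 mult_mono[OF F1 F1] by (simp add: power2_eq_square)
  qed
  have main: "((1 - k) * y0 + s)^2 \<le> ((1 - k)^2 + k) * (y0^2 + Y)"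
  proof (cases "k = 0")
    case True
    then have "D = {}" unfolding k_def by simp
    then have "s = 0" unfolding s_def by auto
    then show ?thesis using True Y0 by simp
  next
    case False
    then have kp: "k > 0" using k0 by simp
    have "k * ((1 - k) * y0 + s)^2 \<le> ((1 - k)^2 + k) * (k * y0^2 + s^2)"
      using zero_le_power2[of "(1 - k) * s - k * y0"]
      by (simp add: power2_eq_square algebra_simps)
    also have "\<dots> \<le> ((1 - k)^2 + k) * (k * y0^2 + k * Y)"
      using sY kp by (intro mult_left_mono) (auto simp: mult.commute add_nonneg_nonneg)
    finally have "k * ((1 - k) * y0 + s)^2 \<le> k * (((1 - k)^2 + k) * (y0^2 + Y))"
      by (simp add: algebra_simps)
    then show ?thesis using kp by simp
  qed
  also have "\<dots> \<le> (real CARD('f))^2 * (y0^2 + Yu)"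
    using coef YYu Y0 by (intro mult_mono) (auto simp: add_nonneg_nonneg)
  finally show ?thesis unfolding k_def s_def Yu_def .
qed

lemma feat_upd:
  assumes "i < m"
  shows "feat m i (a(i:=b)) p = (if snd p = card {j\<in>{0..<m}. j \<noteq> i \<and> fst p \<in> a j} + 1 then 1 else 0) * (if fst p \<in> b then 1 else 0)"
proof -
  obtain g l where p: "p = (g,l)" by force
  have "g \<in> b \<Longrightarrow> {j\<in>{0..<m}. g \<in> (a(i:=b)) j} = insert i {j\<in>{0..<m}. j \<noteq> i \<and> g \<in> a j}"
    using assms by auto
  then have "g \<in> b \<Longrightarrow> nusers m (a(i:=b)) g = card {j\<in>{0..<m}. j \<noteq> i \<and> g \<in> a j} + 1"
    unfolding nusers_def by simp
  then show ?thesis unfolding feat_def p by auto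
qed

lemma quad_sq: fixes x v :: "'a \<Rightarrow> real" shows "(\<Sum>p\<in>C. \<Sum>q\<in>C. x p * (v p * v q) * x q) = (\<Sum>p\<in>C. x p * v p)^2"
  by (simp add: power2_eq_square sum_product mult_ac)

lemma quad_sum: fixes x :: "'a \<Rightarrow> real" shows "(\<Sum>p\<in>C. \<Sum>q\<in>C. x p * (\<Sum>k\<in>K. M k p q) * x q) = (\<Sum>k\<in>K. \<Sum>p\<in>C. \<Sum>q\<in>C. x p * M k p q * x q)"
proof -
  have "(\<Sum>p\<in>C. \<Sum>q\<in>C. x p * (\<Sum>k\<in>K. M k p q) * x q) = (\<Sum>p\<in>C. \<Sum>q\<in>C. \<Sum>k\<in>K. x p * M k p q * x q)"
    by (simp add: sum_distrib_left sum_distrib_right)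
  also have "\<dots> = (\<Sum>p\<in>C. \<Sum>k\<in>K. \<Sum>q\<in>C. x p * M k p q * x q)"
    by (rule sum.cong[OF refl], rule sum.swap)
  also have "\<dots> = (\<Sum>k\<in>K. \<Sum>p\<in>C. \<Sum>q\<in>C. x p * M k p q * x q)"
    by (rule sum.swap)
  finally show ?thesis .
qed

lemma count_sum:
  fixes \<phi> :: "'a \<Rightarrow> real"
  assumes "finite K" "finite S" "\<And>s. \<phi> s \<ge> 0"
  shows "(\<Sum>s\<in>S. real (card {k\<in>K. d k = s}) * \<phi> s) \<le> (\<Sum>k\<in>K. \<phi> (d k))"
proof -
  have "(\<Sum>s\<in>S. real (card {k\<in>K. d k = s}) * \<phi> s) = (\<Sum>s\<in>S. \<Sum>k\<in>{k. k \<in> {k\<in>K. d k \<in> S} \<and> d k = s}. \<phi> (d k))"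
  proof (rule sum.cong[OF refl])
    fix s assume "s \<in> S"
    then have e: "{k. k \<in> {k\<in>K. d k \<in> S} \<and> d k = s} = {k\<in>K. d k = s}" by auto
    have "(\<Sum>k\<in>{k\<in>K. d k = s}. \<phi> (d k)) = (\<Sum>k\<in>{k\<in>K. d k = s}. \<phi> s)" by (rule sum.cong) auto
    then show "real (card {k\<in>K. d k = s}) * \<phi> s = (\<Sum>k\<in>{k. k \<in> {k\<in>K. d k \<in> S} \<and> d k = s}. \<phi> (d k))"
      unfolding e by simp
  qed
  also have "\<dots> = (\<Sum>k\<in>{k\<in>K. d k \<in> S}. \<phi> (d k))"
    by (rule sum.group) (use assms in auto)
  also have "\<dots> \<le> (\<Sum>k\<in>K. \<phi> (d k))" by (rule sum_mono2) (use assms in auto)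
  finally show ?thesis .
qed

lemma ln2_le: "ln 2 \<le> (3/4::real)"
proof -
  have "(35/32::real) \<le> exp (3/32)" using exp_ge_add_one_self[of "3/32::real"] by simp
  then have "(35/32::real)^8 \<le> exp (3/32)^8" by (rule power_mono) simp
  also have "\<dots> = exp (3/4)" by (simp flip: exp_of_nat_mult)
  moreover have "(2::real) \<le> (35/32)^8" by (simp add: power_divide)
  ultimately have "2 \<le> exp (3/4::real)" by linarith
  then show ?thesis by (metis exp_gt_zero ln_exp ln_le_cancel_iff zero_less_numeral)
qed

lemma half_pow: "(1/2::real)^c = exp (- ln 2 * real c)"
proof -
  have "exp (- ln 2 * real c) = exp (- ln 2) ^ c" by (simp add: mult.commute flip: exp_of_nat_mult)
  also have "exp (- ln 2) = (1/2::real)" by (simp add: exp_minus)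
  finally show ?thesis by simp
qed

lemma tail_bound:
  fixes S :: "'a set" and s :: 'a and n :: nat
  assumes S: "finite S" "s \<in> S"
  shows "measure_pmf.prob (Pi_pmf {1..n} undefined (\<lambda>_. pmf_of_set S))
     {d. real n > 2 * real (card S) * real (card {k\<in>{1..n}. d k = s})}
     \<le> exp (- real n / (8 * real (card S)))"
proof -
  define N where "N = real (card S)"
  have Sne: "S \<noteq> {}" using S by auto
  have Npos: "N > 0" unfolding N_def using S by (simp add: card_gt_0_iff) blast
  define h where "h t = (if t = s then 1/2 else (1::real))" for t
  define g where "g d = (\<Prod>k\<in>{1..n}. h (d k))" for d :: "nat \<Rightarrow> 'a"
  define P where "P = Pi_pmf {1..n} undefined (\<lambda>_. pmf_of_set S)"
  define \<theta> where "\<theta> = exp (- ln 2 * (real n / (2 * N)))"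
  have g_eq: "g d = exp (- ln 2 * real (card {k\<in>{1..n}. d k = s}))" for d
  proof -
    have "g d = (\<Prod>k\<in>{k\<in>{1..n}. d k = s}. 1/2)"
      unfolding g_def h_def by (rule prod.inter_filter[symmetric]) simp
    also have "\<dots> = (1/2) ^ card {k\<in>{1..n}. d k = s}" by simp
    finally show ?thesis by (simp add: half_pow)
  qed
  have intc: "integrable (measure_pmf (pmf_of_set S)) h"
    using S Sne by (intro integrable_measure_pmf_finite) simp
  have Eh: "measure_pmf.expectation (pmf_of_set S) h = 1 - 1 / (2 * N)"
  proof -
    have "(\<Sum>t\<in>S. h t) = (\<Sum>t\<in>S. 1 - (if t = s then 1/2 else 0))"
      by (rule sum.cong) (auto simp: h_def)
    also have "\<dots> = N - 1/2" using S by (simp add: sum_subtractf N_def)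
    finally show ?thesis using S Sne Npos
      by (simp add: integral_pmf_of_set N_def[symmetric] field_simps)
  qed
  have Eg: "measure_pmf.expectation P g = (1 - 1 / (2 * N)) ^ n"
    unfolding P_def g_def
    by (subst expectation_prod_Pi_pmf) (use intc Eh in \<open>auto simp: h_def\<close>)
  have intg: "integrable (measure_pmf P) g"
    unfolding P_def g_def by (rule integrable_prod_Pi_pmf) (use intc in auto)
  have thp: "\<theta> > 0" unfolding \<theta>_def by simp
  have sub: "{d. real n > 2 * real (card S) * real (card {k\<in>{1..n}. d k = s})}
      \<subseteq> {d\<in>space (measure_pmf P). g d \<ge> \<theta>}"
  proof safe
    fix d assume "real n > 2 * real (card S) * real (card {k\<in>{1..n}. d k = s})"
    then have cl: "real (card {k\<in>{1..n}. d k = s}) \<le> real n / (2 * N)"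
      using Npos by (simp add: N_def field_simps)
    then have "- ln 2 * (real n / (2 * N)) \<le> - ln 2 * real (card {k\<in>{1..n}. d k = s})"
      using mult_left_mono[OF cl, of "ln 2"] by simp
    then show "\<theta> \<le> g d" unfolding \<theta>_def g_eq by simp
  qed simp
  have "measure_pmf.prob P {d. real n > 2 * real (card S) * real (card {k\<in>{1..n}. d k = s})}
      \<le> measure_pmf.prob P {d\<in>space (measure_pmf P). g d \<ge> \<theta>}"
    by (rule measure_pmf.finite_measure_mono[OF sub]) simp
  also have "\<dots> \<le> measure_pmf.expectation P g / \<theta>"
    by (rule integral_Markov_inequality_measure[OF intg _ _ thp])
       (auto simp: g_def h_def intro!: prod_nonneg)
  also have "\<dots> = (1 - 1 / (2 * N)) ^ n * exp (ln 2 * (real n / (2 * N)))"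
    unfolding Eg \<theta>_def by (simp add: exp_minus field_simps)
  also have "\<dots> \<le> exp (- 1 / (2 * N)) ^ n * exp (ln 2 * (real n / (2 * N)))"
  proof (intro mult_right_mono power_mono)
    show "1 - 1 / (2 * N) \<le> exp (- 1 / (2 * N))" using exp_ge_add_one_self[of "- 1 / (2 * N)"] by simp
    have N1: "N \<ge> 1" unfolding N_def using S Sne by (simp add: Suc_leI card_gt_0_iff)
    then show "0 \<le> 1 - 1 / (2 * N)" by (simp add: field_simps)
  qed simp
  also have "\<dots> = exp (- (1 - ln 2) * (real n / (2 * N)))"
  proof -
    have "exp (- 1 / (2 * N)) ^ n = exp (- (real n / (2 * N)))"
      by (simp flip: exp_of_nat_mult)
    moreover have "exp (- t) * exp (ln 2 * t) = exp (- (1 - ln 2) * t)" for t :: real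
      by (simp add: algebra_simps flip: exp_add)
    ultimately show ?thesis by metis
  qed
  also have "\<dots> \<le> exp (- real n / (8 * N))"
  proof -
    have "real n / (8 * N) \<le> (1 - ln 2) * (real n / (2 * N))"
    proof -
      have "real n / (8 * N) = (1/4) * (real n / (2 * N))" by (simp add: field_simps)
      also have "\<dots> \<le> (1 - ln 2) * (real n / (2 * N))"
        using ln2_le Npos by (intro mult_right_mono) auto
      finally show ?thesis .
    qed
    then have "- (1 - ln 2) * (real n / (2 * N)) \<le> - (real n / (8 * N))" by linarith
    then show ?thesis using exp_mono by (metis minus_divide_left)
  qed
  finally show ?thesis unfolding P_def N_def .
qed

lemma det_part:
  fixes m n :: nat and astar :: "'f::finite joint" and d :: "nat \<Rightarrow> 'f joint" and S :: "'f joint set"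
    and \<pi> :: "'f set pmf" and x :: "'f \<times> nat \<Rightarrow> real" and i :: nat
  assumes im: "i < m" and finS: "finite S"
    and Ssub: "\<And>f. astar(i := tg (astar i) f) \<in> S" and aS: "astar \<in> S"
    and cntS: "\<And>s. s \<in> S \<Longrightarrow> real n \<le> 2 * real (card S) * real (card {k\<in>{1..n}. d k = s})"
    and Nle: "real (card S) \<le> real m * real CARD('f) ^ 2"
    and Spos: "card S > 0"
  shows "0 \<le> (\<Sum>p\<in>coords m. \<Sum>q\<in>coords m. x p * (covV m n d p q -
      (idm p q + real n / (2 * real m * real (CARD('f)) ^ 4) *
             (\<Sum>b\<in>UNIV. pmf \<pi> b * (feat m i (astar(i := b)) p * feat m i (astar(i := b)) q)))) * x q)"
proof -
  define C :: "('f \<times> nat) set" where "C = coords m"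
  define Fc where "Fc = real CARD('f)"
  define N where "N = real (card S)"
  define c where "c = real n / (2 * real m * Fc ^ 4)"
  define Q where "Q j s = (\<Sum>p\<in>C. x p * feat m j s p)" for j s
  define fb where "fb b = feat m i (astar(i := b))" for b
  define R where "R = (Q i astar)^2 + (\<Sum>f\<in>UNIV. (Q i (astar(i := tg (astar i) f)))^2)"
  have Npos: "N > 0" unfolding N_def using Spos by simp
  have mpos: "real m > 0" using im by simp
  have Fpos: "Fc > 0" unfolding Fc_def by simp
  have R0: "R \<ge> 0" unfolding R_def by (intro add_nonneg_nonneg sum_nonneg) auto
  have e1: "covV m n d p q - (idm p q + c * (\<Sum>b\<in>UNIV. pmf \<pi> b * (fb b p * fb b q))) =
     (\<Sum>k\<in>{1..n}. \<Sum>j<m. feat m j (d k) p * feat m j (d k) q) - c * (\<Sum>b\<in>UNIV. pmf \<pi> b * (fb b p * fb b q))" for p q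
    by (simp add: covV_def)
  have form: "(\<Sum>p\<in>C. \<Sum>q\<in>C. x p * (covV m n d p q - (idm p q + c * (\<Sum>b\<in>UNIV. pmf \<pi> b * (fb b p * fb b q)))) * x q)
     = (\<Sum>k\<in>{1..n}. \<Sum>j<m. (Q j (d k))^2) - c * (\<Sum>b\<in>UNIV. pmf \<pi> b * (Q i (astar(i := b)))^2)"
  proof -
    have "(\<Sum>p\<in>C. \<Sum>q\<in>C. x p * (covV m n d p q - (idm p q + c * (\<Sum>b\<in>UNIV. pmf \<pi> b * (fb b p * fb b q)))) * x q)
      = (\<Sum>p\<in>C. \<Sum>q\<in>C. x p * (\<Sum>k\<in>{1..n}. \<Sum>j<m. feat m j (d k) p * feat m j (d k) q) * x q
          - c * (x p * (\<Sum>b\<in>UNIV. pmf \<pi> b * (fb b p * fb b q)) * x q))"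
      unfolding e1 by (intro sum.cong refl) (simp add: algebra_simps)
    also have "\<dots> = (\<Sum>p\<in>C. \<Sum>q\<in>C. x p * (\<Sum>k\<in>{1..n}. \<Sum>j<m. feat m j (d k) p * feat m j (d k) q) * x q)
        - c * (\<Sum>p\<in>C. \<Sum>q\<in>C. x p * (\<Sum>b\<in>UNIV. pmf \<pi> b * (fb b p * fb b q)) * x q)"
      by (simp add: sum_subtractf sum_distrib_left)
    also have "(\<Sum>p\<in>C. \<Sum>q\<in>C. x p * (\<Sum>k\<in>{1..n}. \<Sum>j<m. feat m j (d k) p * feat m j (d k) q) * x q)
       = (\<Sum>k\<in>{1..n}. \<Sum>j<m. (Q j (d k))^2)"
      by (simp add: quad_sum quad_sq Q_def)
    also have "(\<Sum>p\<in>C. \<Sum>q\<in>C. x p * (\<Sum>b\<in>UNIV. pmf \<pi> b * (fb b p * fb b q)) * x q)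
       = (\<Sum>b\<in>UNIV. pmf \<pi> b * (Q i (astar(i := b)))^2)"
    proof -
      have "(\<Sum>p\<in>C. \<Sum>q\<in>C. x p * (\<Sum>b\<in>UNIV. pmf \<pi> b * (fb b p * fb b q)) * x q)
         = (\<Sum>b\<in>UNIV. \<Sum>p\<in>C. \<Sum>q\<in>C. x p * (pmf \<pi> b * (fb b p * fb b q)) * x q)"
        by (rule quad_sum)
      also have "\<dots> = (\<Sum>b\<in>UNIV. pmf \<pi> b * (\<Sum>p\<in>C. \<Sum>q\<in>C. x p * (fb b p * fb b q) * x q))"
        by (simp add: sum_distrib_left mult_ac)
      finally show ?thesis by (simp add: quad_sq Q_def fb_def)
    qed
    finally show ?thesis .
  qed
  have a: "(\<Sum>k\<in>{1..n}. (Q i (d k))^2) \<le> (\<Sum>k\<in>{1..n}. \<Sum>j<m. (Q j (d k))^2)"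
    by (intro sum_mono member_le_sum) (use im in auto)
  have b: "(\<Sum>s\<in>S. real (card {k\<in>{1..n}. d k = s}) * (Q i s)^2) \<le> (\<Sum>k\<in>{1..n}. (Q i (d k))^2)"
    by (rule count_sum) (use finS in auto)
  have cc: "(\<Sum>s\<in>S. (real n / (2 * N)) * (Q i s)^2) \<le> (\<Sum>s\<in>S. real (card {k\<in>{1..n}. d k = s}) * (Q i s)^2)"
  proof (rule sum_mono)
    fix s assume "s \<in> S"
    then have "real n / (2 * N) \<le> real (card {k\<in>{1..n}. d k = s})"
      using cntS[of s] Npos by (simp add: N_def field_simps)
    then show "(real n / (2 * N)) * (Q i s)^2 \<le> real (card {k\<in>{1..n}. d k = s}) * (Q i s)^2"
      by (rule mult_right_mono) simp
  qed
  have dd: "R \<le> (\<Sum>s\<in>S. (Q i s)^2)"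
  proof -
    define t where "t f = astar(i := tg (astar i) f)" for f
    have inj: "inj t"
    proof (rule injI)
      fix f g assume "t f = t g"
      then have "tg (astar i) f = tg (astar i) g" unfolding t_def by (metis fun_upd_same)
      then show "f = g" unfolding tg_def by (auto split: if_splits)
    qed
    have nin: "astar \<notin> range t"
    proof
      assume "astar \<in> range t"
      then obtain f where "astar = t f" by auto
      then have "astar i = tg (astar i) f" unfolding t_def by (metis fun_upd_same)
      then show False unfolding tg_def by (auto split: if_splits)
    qed
    have "R = (\<Sum>s\<in>insert astar (range t). (Q i s)^2)"
    proof -
      have "(\<Sum>s\<in>range t. (Q i s)^2) = (\<Sum>f\<in>UNIV. (Q i (t f))^2)"
        by (simp add: sum.reindex[OF inj])
      then show ?thesis unfolding R_def using nin by (simp add: t_def)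
    qed
    also have "\<dots> \<le> (\<Sum>s\<in>S. (Q i s)^2)"
      by (rule sum_mono2) (use finS aS Ssub in \<open>auto simp: t_def\<close>)
    finally show ?thesis .
  qed
  define E where "E p = (if snd p = card {j\<in>{0..<m}. j \<noteq> i \<and> fst p \<in> astar j} + 1 then 1 else (0::real))" for p
  have Qform: "Q i (astar(i := B)) = (\<Sum>p\<in>C. x p * (E p * (if fst p \<in> B then 1 else 0)))" for B
    unfolding Q_def E_def by (simp add: feat_upd[OF im])
  have e: "(Q i (astar(i := B)))^2 \<le> Fc^2 * R" for B
  proof -
    have qa: "Q i astar = (\<Sum>p\<in>C. x p * (E p * (if fst p \<in> astar i then 1 else 0)))"
      using Qform[of "astar i"] by simp
    have "Q i (astar(i := B)) = (1 - real (card {f. (f \<in> astar i) \<noteq> (f \<in> B)})) * Q i astar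
      + (\<Sum>f\<in>{f. (f \<in> astar i) \<noteq> (f \<in> B)}. Q i (astar(i := tg (astar i) f)))"
      unfolding qa Qform by (rule Q_identity)
    then have "(Q i (astar(i := B)))^2 = ((1 - real (card {f. (f \<in> astar i) \<noteq> (f \<in> B)})) * Q i astar
      + (\<Sum>f\<in>{f. (f \<in> astar i) \<noteq> (f \<in> B)}. Q i (astar(i := tg (astar i) f))))^2" by simp
    also have "\<dots> \<le> (real CARD('f))^2 * ((Q i astar)^2 + (\<Sum>f\<in>UNIV. (Q i (astar(i := tg (astar i) f)))^2))"
      by (rule sq_bound)
    finally show ?thesis unfolding R_def Fc_def .
  qed
  have f: "(\<Sum>b\<in>UNIV. pmf \<pi> b * (Q i (astar(i := b)))^2) \<le> Fc^2 * R"
  proof -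
    have "(\<Sum>b\<in>UNIV. pmf \<pi> b * (Q i (astar(i := b)))^2) \<le> (\<Sum>b\<in>UNIV. pmf \<pi> b * (Fc^2 * R))"
      by (intro sum_mono mult_left_mono e) auto
    also have "\<dots> = Fc^2 * R" by (simp add: sum_distrib_right[symmetric] sum_pmf_eq_1)
    finally show ?thesis .
  qed
  have g: "c * Fc^2 \<le> real n / (2 * N)"
  proof -
    have "c * Fc^2 = real n / (2 * (real m * Fc^2))" unfolding c_def using Fpos
      by (simp add: field_simps power2_eq_square power4_eq_xxxx)
    also have "\<dots> \<le> real n / (2 * N)"
      using Nle Npos mpos Fpos unfolding N_def Fc_def by (intro divide_left_mono) auto
    finally show ?thesis .
  qed
  have "c * (\<Sum>b\<in>UNIV. pmf \<pi> b * (Q i (astar(i := b)))^2) \<le> c * (Fc^2 * R)"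
    using f unfolding c_def by (intro mult_left_mono) auto
  also have "\<dots> = (c * Fc^2) * R" by simp
  also have "\<dots> \<le> (real n / (2 * N)) * R" using g R0 by (rule mult_right_mono)
  also have "\<dots> \<le> (\<Sum>s\<in>S. (real n / (2 * N)) * (Q i s)^2)"
  proof -
    have "(real n / (2 * N)) * R \<le> (real n / (2 * N)) * (\<Sum>s\<in>S. (Q i s)^2)"
      using dd Npos by (intro mult_left_mono) auto
    also have "\<dots> = (\<Sum>s\<in>S. (real n / (2 * N)) * (Q i s)^2)" by (rule sum_distrib_left)
    finally show ?thesis .
  qed
  finally have "c * (\<Sum>b\<in>UNIV. pmf \<pi> b * (Q i (astar(i := b)))^2) \<le> (\<Sum>k\<in>{1..n}. \<Sum>j<m. (Q j (d k))^2)"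
    using a b cc by linarith
  then have "0 \<le> (\<Sum>p\<in>C. \<Sum>q\<in>C. x p * (covV m n d p q - (idm p q + c * (\<Sum>b\<in>UNIV. pmf \<pi> b * (fb b p * fb b q)))) * x q)"
    unfolding form by linarith
  then show ?thesis unfolding C_def c_def fb_def Fc_def .
qed

theorem mainTheorem8:
  fixes m n :: nat and r :: "'f::finite \<Rightarrow> nat \<Rightarrow> real"
    and astar :: "'f joint" and \<delta> :: real
  assumes "m \<ge> 1" and "CARD('f) \<ge> 2"
    and "pure_NE m r astar"
    and "0 < \<delta>" and "\<delta> < 1"
    and "real n \<ge> 8 * (real (m * CARD('f)) + 1) * ln ((real (m * CARD('f)) + 1) / \<delta>)"
  shows "measure_pmf.prob (dataset_pmf n (toggle_set m astar))
     {data. \<forall>i<m. \<forall>\<pi> :: 'f set pmf.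
        loewner_ge (coords m) (covV m n data)
          (\<lambda>p q. idm p q + real n / (2 * real m * real (CARD('f)) ^ 4) *
             (\<Sum>b\<in>UNIV. pmf \<pi> b * (feat m i (astar(i := b)) p * feat m i (astar(i := b)) q)))}
     \<ge> 1 - \<delta>"
proof -
  note m1 = assms(1) and F2 = assms(2) and dpos = assms(4) and dlt = assms(5) and nbig = assms(6)
  define S where "S = toggle_set m astar"
  define N0 where "N0 = real (m * CARD('f)) + 1"
  define P where "P = dataset_pmf n S"
  define cnt where "cnt s d = card {k\<in>{1..n}. d k = s}" for s and d :: "nat \<Rightarrow> 'f joint"
  define G where "G = {d. \<forall>s\<in>S. real n \<le> 2 * real (card S) * real (cnt s d)}"
  define T where "T = {data. \<forall>i<m. \<forall>\<pi> :: 'f set pmf.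
        loewner_ge (coords m) (covV m n data)
          (\<lambda>p q. idm p q + real n / (2 * real m * real (CARD('f)) ^ 4) *
             (\<Sum>b\<in>UNIV. pmf \<pi> b * (feat m i (astar(i := b)) p * feat m i (astar(i := b)) q)))}"
  have Ssub: "S \<subseteq> insert astar ((\<lambda>(i, f). astar(i := tg (astar i) f)) ` ({0..<m} \<times> UNIV))"
  proof
    fix s assume "s \<in> S"
    then consider "s = astar" | i f where "i < m" "s = astar(i := tg (astar i) f)"
      unfolding S_def toggle_set_def tg_def by blast
    then show "s \<in> insert astar ((\<lambda>(i, f). astar(i := tg (astar i) f)) ` ({0..<m} \<times> UNIV))"
    proof cases
      case 2
      then show ?thesis by (intro insertI2 rev_image_eqI[of "(i, f)"]) auto
    qed simp
  qed
  have finS: "finite S" by (rule finite_subset[OF Ssub]) auto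
  have aS: "astar \<in> S" unfolding S_def toggle_set_def by simp
  have tS: "astar(i := tg (astar i) f) \<in> S" if "i < m" for i f
    unfolding S_def toggle_set_def tg_def using that by blast
  have Spos: "card S > 0" using finS aS by (auto simp: card_gt_0_iff)
  have cardS: "card S \<le> m * CARD('f) + 1"
  proof -
    have "card S \<le> card (insert astar ((\<lambda>(i, f). astar(i := tg (astar i) f)) ` ({0..<m} \<times> (UNIV::'f set))))"
      by (rule card_mono[OF _ Ssub]) auto
    also have "\<dots> \<le> Suc (card ((\<lambda>(i, f). astar(i := tg (astar i) f)) ` ({0..<m} \<times> (UNIV::'f set))))"
      by (rule card_insert_le_m1) auto
    also have "card ((\<lambda>(i, f). astar(i := tg (astar i) f)) ` ({0..<m} \<times> (UNIV::'f set))) \<le> card ({0..<m} \<times> (UNIV::'f set))"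
      by (rule card_image_le) auto
    also have "card ({0..<m} \<times> (UNIV::'f set)) = m * CARD('f)" by (simp add: card_cartesian_product)
    finally show ?thesis by simp
  qed
  have NN0: "real (card S) \<le> N0"
  proof -
    have "real (card S) \<le> real (m * CARD('f) + 1)" using cardS by (simp only: of_nat_le_iff)
    then show ?thesis unfolding N0_def by simp
  qed
  have Nle: "real (card S) \<le> real m * real CARD('f) ^ 2"
  proof -
    have "m * CARD('f) + 1 \<le> m * CARD('f) * CARD('f)"
    proof -
      have "m * CARD('f) \<ge> 1" using m1 F2 by simp
      then have "m * CARD('f) + 1 \<le> m * CARD('f) * 2" by simp
      also have "\<dots> \<le> m * CARD('f) * CARD('f)" using F2 by (intro mult_left_mono) auto
      finally show ?thesis .
    qed
    then have "card S \<le> m * CARD('f) * CARD('f)" using cardS by linarith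
    then have "real (card S) \<le> real (m * CARD('f) * CARD('f))" by linarith
    then show ?thesis by (simp add: power2_eq_square)
  qed
  have GT: "G \<subseteq> T"
  proof
    fix d assume dG: "d \<in> G"
    show "d \<in> T" unfolding T_def loewner_ge_def
    proof (intro CollectI allI impI)
      fix i \<pi> x assume im: "i < m"
      show "0 \<le> (\<Sum>p\<in>coords m. \<Sum>q\<in>coords m. x p * (covV m n d p q -
          (idm p q + real n / (2 * real m * real (CARD('f)) ^ 4) *
             (\<Sum>b\<in>UNIV. pmf \<pi> b * (feat m i (astar(i := b)) p * feat m i (astar(i := b)) q)))) * x q)"
        by (rule det_part[OF im finS tS[OF im] aS _ Nle Spos])
           (use dG in \<open>auto simp: G_def cnt_def\<close>)
    qed
  qed
  have N0pos: "N0 \<ge> 1" unfolding N0_def by simp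
  define L where "L = ln (N0 / \<delta>)"
  have Lpos: "L > 0" unfolding L_def using N0pos dpos dlt
    by (intro ln_gt_zero) (simp add: field_simps)
  have each: "measure_pmf.prob P {d. real n > 2 * real (card S) * real (cnt s d)} \<le> \<delta> / N0"
    if sS: "s \<in> S" for s
  proof -
    have "measure_pmf.prob P {d. real n > 2 * real (card S) * real (cnt s d)}
       \<le> exp (- real n / (8 * real (card S)))"
      unfolding P_def dataset_pmf_def cnt_def by (rule tail_bound[OF finS sS])
    also have "\<dots> \<le> exp (- L)"
    proof -
      have "8 * real (card S) * L \<le> 8 * N0 * L" using NN0 Lpos by simp
      also have "\<dots> \<le> real n" using nbig unfolding N0_def L_def by simp
      finally have "L \<le> real n / (8 * real (card S))" using Spos by (simp add: field_simps)
      then show ?thesis by simp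
    qed
    also have "\<dots> = \<delta> / N0" unfolding L_def using dpos N0pos by (simp add: exp_minus)
    finally show ?thesis .
  qed
  have compl: "UNIV - G = (\<Union>s\<in>S. {d. real n > 2 * real (card S) * real (cnt s d)})"
    unfolding G_def by (auto simp: not_le)
  have "measure_pmf.prob P (UNIV - G) \<le> (\<Sum>s\<in>S. measure_pmf.prob P {d. real n > 2 * real (card S) * real (cnt s d)})"
    unfolding compl by (rule measure_pmf.finite_measure_subadditive_finite[OF finS]) auto
  also have "\<dots> \<le> (\<Sum>s\<in>S. \<delta> / N0)" by (rule sum_mono) (rule each)
  also have "\<dots> = real (card S) * (\<delta> / N0)" by simp
  also have "\<dots> \<le> N0 * (\<delta> / N0)" using NN0 dpos N0pos by (intro mult_right_mono) auto
  also have "\<dots> = \<delta>" using N0pos by simp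
  finally have bad: "measure_pmf.prob P (UNIV - G) \<le> \<delta>" .
  have "measure_pmf.prob P (UNIV - G) = 1 - measure_pmf.prob P G"
    using measure_pmf.prob_compl[of G P] by simp
  then have "1 - \<delta> \<le> measure_pmf.prob P G" using bad by simp
  also have "\<dots> \<le> measure_pmf.prob P T" by (rule measure_pmf.finite_measure_mono[OF GT]) simp
  finally show ?thesis unfolding P_def T_def S_def .
qed

end
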